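(* Let $G$ be a triangle-free simple undirected graph on vertex set $[n]$. If $X\in\operatorname{R}_1[\mathcal{M}_n^+(G)]$, then $M(X)\ge 0$.
   Context: $\mathcal{M}_n^+(G)$ is the cone of $n\times n$ complex PSD matrices $X$ with $X_{ij}=0$ whenever $i\neq j$ and $\{i,j\}$ is not an edge of $G$. For a cone $\mathcal{C}\subseteq\mathcal{M}_n^+$, $\operatorname{R}_1[\mathcal{C}]$ is the convex cone generated by the rank-1 matrices in $\mathcal{C}$. The comparison matrix $M(X)$ is defined by $M(X)_{ii}=|X_{ii}|$ and $M(X)_{ij}=-|X_{ij}|$ for $i\ne j$. *)

theory Defs
  imports "HOL-Analysis.Analysis"
begin

text \<open>Complex n x n matrices are modelled as complex^'n^'n, with the finite type 'n
  playing the role of the vertex set [n].\<close>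

definition hermitian :: "complex^'n^'n \<Rightarrow> bool" where
  "hermitian A \<longleftrightarrow> (\<forall>i j. A $ i $ j = cnj (A $ j $ i))"

definition psd :: "complex^'n::finite^'n \<Rightarrow> bool" where
  "psd A \<longleftrightarrow> hermitian A \<and>
     (\<forall>x :: complex^'n. 0 \<le> Re (\<Sum>i\<in>UNIV. \<Sum>j\<in>UNIV. cnj (x $ i) * A $ i $ j * x $ j))"

definition simple_graph :: "('n \<Rightarrow> 'n \<Rightarrow> bool) \<Rightarrow> bool" where
  "simple_graph E \<longleftrightarrow> (\<forall>i j. E i j \<longrightarrow> E j i) \<and> (\<forall>i. \<not> E i i)"

definition triangle_free :: "('n \<Rightarrow> 'n \<Rightarrow> bool) \<Rightarrow> bool" where
  "triangle_free E \<longleftrightarrow> (\<nexists>i j k. E i j \<and> E j k \<and> E i k)"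

definition psd_graph_cone :: "('n::finite \<Rightarrow> 'n \<Rightarrow> bool) \<Rightarrow> (complex^'n^'n) set" where
  "psd_graph_cone E = {X. psd X \<and> (\<forall>i j. i \<noteq> j \<and> \<not> E i j \<longrightarrow> X $ i $ j = 0)}"

text \<open>R_1[C]: the convex cone generated by the rank-1 matrices in C
  (all finite nonnegative combinations; the empty combination gives 0).\<close>

definition R1 :: "(complex^'n::finite^'n) set \<Rightarrow> (complex^'n^'n) set" where
  "R1 C = {X. \<exists>(k::nat) (c::nat \<Rightarrow> real) (A::nat \<Rightarrow> complex^'n^'n).
              (\<forall>l<k. 0 \<le> c l \<and> A l \<in> C \<and> rank (A l) = 1) \<and>
              X = (\<Sum>l<k. c l *\<^sub>R A l)}"

definition comparison_matrix :: "complex^'n^'n \<Rightarrow> complex^'n^'n" where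
  "comparison_matrix X = (\<chi> i j. if i = j then complex_of_real (cmod (X $ i $ j))
                                  else - complex_of_real (cmod (X $ i $ j)))"

end

theory Submission
  imports Defs
begin

lemma rank1_factor:
  fixes A :: "complex^'n::finite^'n"
  assumes "rank A = 1"
  shows "\<exists>c v. \<forall>i j. A $ i $ j = c i * v $ j"
proof -
  obtain B where B: "B \<subseteq> rows A" "vec.independent B" "rows A \<subseteq> vec.span B"
      "card B = vec.dim (rows A)"
    using vec.basis_exists by blast
  then have "card B = 1" using assms by (simp add: row_rank_def_gen)
  then obtain v where v: "B = {v}" using card_1_singletonE by blast
  have "\<forall>i. \<exists>k. row i A = k *s v"
  proof
    fix i
    have "row i A \<in> rows A" by (auto simp: rows_def)
    then have "row i A \<in> vec.span {v}" using B(3) v by blast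
    then show "\<exists>k. row i A = k *s v" by (auto simp: vec.span_singleton)
  qed
  then obtain c where c: "\<And>i. row i A = c i *s v" by metis
  have "A $ i $ j = c i * v $ j" for i j
  proof -
    have "row i A $ j = A $ i $ j" by (simp add: row_def)
    then show ?thesis using c[of i] by simp
  qed
  then show ?thesis by blast
qed

lemma psd_diag:
  fixes A :: "complex^'n::finite^'n"
  assumes "psd A"
  shows "A $ i $ i = complex_of_real (Re (A $ i $ i))" "Re (A $ i $ i) \<ge> 0"
proof -
  have h: "A $ i $ i = cnj (A $ i $ i)" using assms unfolding psd_def hermitian_def by blast
  then have "Im (A $ i $ i) = 0" by (metis cnj.sel(2) neg_equal_zero)
  then show "A $ i $ i = complex_of_real (Re (A $ i $ i))" by (simp add: complex_eq_iff)
  define x :: "complex^'n" where "x = axis i 1"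
  have "0 \<le> Re (\<Sum>a\<in>UNIV. \<Sum>b\<in>UNIV. cnj (x $ a) * A $ a $ b * x $ b)"
    using assms by (simp add: psd_def)
  also have "(\<Sum>a\<in>UNIV. \<Sum>b\<in>UNIV. cnj (x $ a) * A $ a $ b * x $ b) =
      (\<Sum>a\<in>UNIV. \<Sum>b\<in>UNIV. if a = i then (if b = i then A $ a $ b else 0) else 0)"
    by (intro sum.cong refl) (simp add: x_def axis_def)
  also have "\<dots> = A $ i $ i" by (subst sum.swap) simp
  finally show "Re (A $ i $ i) \<ge> 0" .
qed

definition rr :: "complex^'n^'n \<Rightarrow> ('n \<Rightarrow> real) \<Rightarrow> 'n \<Rightarrow> 'n \<Rightarrow> real" where
  "rr A y i j = (if i = j then cmod (A$i$i) * y i * y i else - cmod (A$i$j) * y i * y j)"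

lemma rank1_nonneg:
  fixes A :: "complex^'n::finite^'n"
  assumes tf: "triangle_free E" and cone: "A \<in> psd_graph_cone E" and rk: "rank A = 1"
    and y: "\<And>i. y i \<ge> 0"
  shows "0 \<le> (\<Sum>i\<in>UNIV. \<Sum>j\<in>UNIV. rr A y i j)"
proof -
  obtain c v where cv: "\<And>i j. A $ i $ j = c i * v $ j" using rank1_factor[OF rk] by blast
  have ps: "psd A" using cone by (simp add: psd_graph_cone_def)
  define p where "p i = Re (A $ i $ i)" for i
  have pd: "A $ i $ i = complex_of_real (p i)" "p i \<ge> 0" for i
    unfolding p_def using psd_diag[OF ps, of i] by blast+
  have herm: "A $ j $ i = cnj (A $ i $ j)" for i j using ps unfolding psd_def hermitian_def by blast
  have minor: "A$i$j * A$j$i = A$i$i * A$j$j" for i j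
    by (simp add: cv mult_ac)
  have sq: "(cmod (A$i$j))^2 = p i * p j" for i j
  proof -
    have "complex_of_real ((cmod (A$i$j))^2) = A$i$j * cnj (A$i$j)" by (rule complex_norm_square)
    also have "\<dots> = A$i$i * A$j$j" using minor[of i j] herm[of i j] by simp
    also have "\<dots> = complex_of_real (p i * p j)" by (simp add: pd)
    finally show ?thesis by (simp only: of_real_eq_iff)
  qed
  have cm: "cmod (A$i$j) = sqrt (p i) * sqrt (p j)" for i j
  proof -
    have "cmod (A$i$j) = sqrt ((cmod (A$i$j))^2)" by simp
    also have "\<dots> = sqrt (p i * p j)" by (simp only: sq)
    also have "\<dots> = sqrt (p i) * sqrt (p j)" by (rule real_sqrt_mult)
    finally show ?thesis .
  qed
  have nz: "E i j" if "p i \<noteq> 0" "p j \<noteq> 0" "i \<noteq> j" for i j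
  proof (rule ccontr)
    assume "\<not> E i j"
    then have "A $ i $ j = 0" using cone that(3) by (simp add: psd_graph_cone_def)
    then have "p i * p j = 0" using sq[of i j] by simp
    then show False using that by simp
  qed
  have three: False if "p i \<noteq> 0" "p j \<noteq> 0" "p k \<noteq> 0" "i \<noteq> j" "j \<noteq> k" "i \<noteq> k" for i j k
    using nz[OF that(1,2,4)] nz[OF that(2,3,5)] nz[OF that(1,3,6)] tf
    unfolding triangle_free_def by blast
  obtain a b where ab: "\<And>i. p i \<noteq> 0 \<Longrightarrow> i = a \<or> i = b"
  proof (cases "\<exists>a. p a \<noteq> 0")
    case True
    then obtain a where a: "p a \<noteq> 0" by blast
    show ?thesis
    proof (cases "\<exists>b. p b \<noteq> 0 \<and> b \<noteq> a")
      case True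
      then obtain b where b: "p b \<noteq> 0" "b \<noteq> a" by blast
      show ?thesis
      proof (rule that)
        fix i assume "p i \<noteq> 0"
        then show "i = a \<or> i = b" using three[of a b i] a b by blast
      qed
    next
      case False
      then show ?thesis using that[of a a] by blast
    qed
  next
    case False
    then show ?thesis using that by blast
  qed
  define s where "s i = sqrt (p i) * y i" for i
  have rs: "rr A y i j = (if i = j then s i * s i else - (s i * s j))" for i j
  proof (cases "i = j")
    case True
    have "cmod (A$i$i) = p i" using pd[of i] by simp
    moreover have "sqrt (p i) * sqrt (p i) = p i" using pd(2)[of i] by simp
    ultimately show ?thesis using True by (simp add: rr_def s_def mult_ac)
  next
    case False
    then show ?thesis by (simp add: rr_def s_def cm mult_ac)
  qed
  have s0: "s i = 0" if "i \<notin> {a,b}" for i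
    using ab[of i] that by (auto simp: s_def)
  define g where "g i j = (if i = j then s i * s i else - (s i * s j))" for i j
  have inner: "(\<Sum>j\<in>UNIV. g i j) = (\<Sum>j\<in>{a,b}. g i j)" for i
    by (rule sum.mono_neutral_right) (auto simp: g_def s0)
  have gz: "(\<Sum>j\<in>{a,b}. g i j) = 0" if "i \<notin> {a,b}" for i
    using that by (intro sum.neutral ballI) (auto simp: g_def s0[OF that])
  have outer: "(\<Sum>i\<in>UNIV. \<Sum>j\<in>{a,b}. g i j) = (\<Sum>i\<in>{a,b}. \<Sum>j\<in>{a,b}. g i j)"
    by (rule sum.mono_neutral_right) (use gz in auto)
  have "(\<Sum>i\<in>UNIV. \<Sum>j\<in>UNIV. rr A y i j) = (\<Sum>i\<in>{a,b}. \<Sum>j\<in>{a,b}. g i j)"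
    using inner outer by (simp add: rs g_def[symmetric])
  also have "\<dots> \<ge> 0"
  proof (cases "a = b")
    case True then show ?thesis by (simp add: g_def)
  next
    case False
    have "(\<Sum>i\<in>{a,b}. \<Sum>j\<in>{a,b}. g i j) = (s a - s b)^2"
      using False by (simp add: g_def power2_eq_square algebra_simps)
    then show ?thesis by simp
  qed
  finally show ?thesis .
qed


lemma entry_ge:
  fixes X :: "complex^'n::finite^'n" and x :: "complex^'n"
  shows "rr X (\<lambda>i. cmod (x $ i)) i j \<le> Re (cnj (x $ i) * comparison_matrix X $ i $ j * x $ j)"
proof (cases "i = j")
  case True
  have "cnj (x $ i) * comparison_matrix X $ i $ j * x $ j
      = complex_of_real (cmod (X $ i $ i)) * (x $ i * cnj (x $ i))"
    using True by (simp add: comparison_matrix_def mult_ac)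
  also have "\<dots> = complex_of_real (cmod (X $ i $ i) * (cmod (x $ i))^2)"
    by (simp add: complex_norm_square[symmetric])
  finally show ?thesis using True by (simp add: rr_def power2_eq_square mult_ac)
next
  case False
  have "cnj (x $ i) * comparison_matrix X $ i $ j * x $ j
      = complex_of_real (- cmod (X $ i $ j)) * (cnj (x $ i) * x $ j)"
    using False by (simp add: comparison_matrix_def mult_ac)
  then have "Re (cnj (x $ i) * comparison_matrix X $ i $ j * x $ j)
      = - cmod (X $ i $ j) * Re (cnj (x $ i) * x $ j)" by simp
  moreover have "Re (cnj (x $ i) * x $ j) \<le> cmod (x $ i) * cmod (x $ j)"
    by (metis complex_Re_le_cmod complex_mod_cnj norm_mult)
  ultimately show ?thesis using False
    by (simp add: rr_def) (metis mult_left_mono norm_ge_zero mult.assoc)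
qed

lemma rr_comb:
  fixes A :: "nat \<Rightarrow> complex^'n::finite^'n"
  assumes c: "\<And>l. l < k \<Longrightarrow> 0 \<le> c l" and ps: "\<And>l. l < k \<Longrightarrow> psd (A l)"
    and y: "\<And>i. 0 \<le> y i"
  shows "(\<Sum>l<k. c l * rr (A l) y i j) \<le> rr (\<Sum>l<k. c l *\<^sub>R A l) y i j"
proof -
  have ent: "(\<Sum>l<k. c l *\<^sub>R A l) $ i $ j = (\<Sum>l<k. c l *\<^sub>R (A l $ i $ j))" for i j
    by (simp add: sum_component)
  show ?thesis
  proof (cases "i = j")
    case True
    have d: "cmod (A l $ i $ i) = Re (A l $ i $ i)" if "l < k" for l
    proof -
      have "A l $ i $ i = complex_of_real (Re (A l $ i $ i))" "Re (A l $ i $ i) \<ge> 0"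
        using psd_diag[OF ps[OF that]] by blast+
      then show ?thesis by (metis abs_of_nonneg norm_of_real)
    qed
    have "(\<Sum>l<k. c l * cmod (A l $ i $ i)) = (\<Sum>l<k. c l * Re (A l $ i $ i))"
      using d by (intro sum.cong refl) simp
    also have "\<dots> = Re (\<Sum>l<k. c l *\<^sub>R (A l $ i $ i))"
      by (simp add: Re_sum)
    also have "\<dots> \<le> cmod ((\<Sum>l<k. c l *\<^sub>R A l) $ i $ i)"
      by (simp only: ent complex_Re_le_cmod)
    finally have le: "(\<Sum>l<k. c l * cmod (A l $ i $ i)) \<le> cmod ((\<Sum>l<k. c l *\<^sub>R A l) $ i $ i)" .
    have "(\<Sum>l<k. c l * rr (A l) y i j) = (\<Sum>l<k. c l * cmod (A l $ i $ i) * (y i * y i))"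
      using True by (intro sum.cong refl) (simp add: rr_def mult_ac)
    also have "\<dots> = (\<Sum>l<k. c l * cmod (A l $ i $ i)) * (y i * y i)"
      by (simp add: sum_distrib_right)
    also have "\<dots> \<le> cmod ((\<Sum>l<k. c l *\<^sub>R A l) $ i $ i) * (y i * y i)"
      using le y[of i] by (simp add: mult_right_mono)
    finally show ?thesis using True by (simp add: rr_def mult_ac)
  next
    case False
    have "cmod ((\<Sum>l<k. c l *\<^sub>R A l) $ i $ j) \<le> (\<Sum>l<k. norm (c l *\<^sub>R (A l $ i $ j)))"
      unfolding ent by (rule norm_sum)
    also have "\<dots> = (\<Sum>l<k. c l * cmod (A l $ i $ j))"
      using c by (intro sum.cong refl) simp
    finally have le: "cmod ((\<Sum>l<k. c l *\<^sub>R A l) $ i $ j) \<le> (\<Sum>l<k. c l * cmod (A l $ i $ j))" .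
    have yy: "0 \<le> y i * y j" using y by simp
    have "(\<Sum>l<k. c l * rr (A l) y i j) = (\<Sum>l<k. - (c l * cmod (A l $ i $ j) * (y i * y j)))"
      using False by (intro sum.cong refl) (simp add: rr_def mult_ac)
    also have "\<dots> = - ((\<Sum>l<k. c l * cmod (A l $ i $ j)) * (y i * y j))"
      by (simp add: sum_distrib_right sum_negf)
    also have "\<dots> \<le> - (cmod ((\<Sum>l<k. c l *\<^sub>R A l) $ i $ j) * (y i * y j))"
      using mult_right_mono[OF le yy] by simp
    finally show ?thesis using False by (simp add: rr_def mult_ac)
  qed
qed

theorem mainTheorem7:
  fixes E :: "'n::finite \<Rightarrow> 'n \<Rightarrow> bool" and X :: "complex^'n^'n"
  assumes "simple_graph E" and "triangle_free E"
    and "X \<in> R1 (psd_graph_cone E)"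
  shows "psd (comparison_matrix X)"
proof -
  obtain k :: nat and c :: "nat \<Rightarrow> real" and A :: "nat \<Rightarrow> complex^'n^'n" where kc: "\<And>l. l < k \<Longrightarrow> 0 \<le> c l \<and> A l \<in> psd_graph_cone E \<and> rank (A l) = 1"
    and X: "X = (\<Sum>l<k. c l *\<^sub>R A l)"
    using assms(3) unfolding R1_def by blast
  have psA: "psd (A l)" if "l < k" for l using kc[OF that] unfolding psd_graph_cone_def by blast
  have hermA: "A l $ j $ i = cnj (A l $ i $ j)" if "l < k" for l i j
    using psA[OF that] unfolding psd_def hermitian_def by blast
  have ent: "X $ i $ j = (\<Sum>l<k. c l *\<^sub>R (A l $ i $ j))" for i j
    unfolding X by (simp add: sum_component)
  have hX: "X $ j $ i = cnj (X $ i $ j)" for i j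
  proof -
    have "X $ j $ i = (\<Sum>l<k. c l *\<^sub>R cnj (A l $ i $ j))"
      unfolding ent by (rule sum.cong[OF refl]) (simp add: hermA[of _ i j])
    also have "\<dots> = cnj (X $ i $ j)" unfolding ent by (simp add: cnj_sum)
    finally show ?thesis .
  qed
  have herm: "hermitian (comparison_matrix X)"
    unfolding hermitian_def comparison_matrix_def
  proof (intro allI)
    fix i j
    have "cmod (X $ i $ j) = cmod (X $ j $ i)" using hX[of i j] by simp
    then show "(\<chi> i j. if i = j then complex_of_real (cmod (X $ i $ j))
                 else - complex_of_real (cmod (X $ i $ j))) $ i $ j =
          cnj ((\<chi> i j. if i = j then complex_of_real (cmod (X $ i $ j))
                 else - complex_of_real (cmod (X $ i $ j))) $ j $ i)"
      by auto
  qed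
  have form: "0 \<le> Re (\<Sum>i\<in>UNIV. \<Sum>j\<in>UNIV. cnj (x $ i) * comparison_matrix X $ i $ j * x $ j)"
    for x :: "complex^'n"
  proof -
    define y where "y i = cmod (x $ i)" for i
    have y0: "\<And>i. 0 \<le> y i" by (simp add: y_def)
    have "0 \<le> (\<Sum>l<k. c l * (\<Sum>i\<in>UNIV. \<Sum>j\<in>UNIV. rr (A l) y i j))"
    proof (rule sum_nonneg, rule mult_nonneg_nonneg)
      fix l assume "l \<in> {..<k}"
      then have lk: "l < k" by simp
      have h1: "A l \<in> psd_graph_cone E" and h2: "rank (A l) = 1" and h3: "0 \<le> c l"
        using kc[OF lk] by blast+
      show "0 \<le> c l" by (rule h3)
      show "0 \<le> (\<Sum>i\<in>UNIV. \<Sum>j\<in>UNIV. rr (A l) y i j)"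
        by (rule rank1_nonneg[OF assms(2) h1 h2 y0])
    qed
    also have "\<dots> = (\<Sum>l<k. \<Sum>i\<in>UNIV. \<Sum>j\<in>UNIV. c l * rr (A l) y i j)"
      by (simp only: sum_distrib_left)
    also have "\<dots> = (\<Sum>i\<in>UNIV. \<Sum>l<k. \<Sum>j\<in>UNIV. c l * rr (A l) y i j)"
      by (rule sum.swap)
    also have "\<dots> = (\<Sum>i\<in>UNIV. \<Sum>j\<in>UNIV. \<Sum>l<k. c l * rr (A l) y i j)"
      by (rule sum.cong[OF refl], rule sum.swap)
    also have "\<dots> \<le> (\<Sum>i\<in>UNIV. \<Sum>j\<in>UNIV. rr X y i j)"
      unfolding X
    proof (intro sum_mono rr_comb)
      show "\<And>l. l < k \<Longrightarrow> 0 \<le> c l" using kc by blast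
      show "\<And>l. l < k \<Longrightarrow> psd (A l)" using psA by blast
    qed (rule y0)
    also have "\<dots> \<le> (\<Sum>i\<in>UNIV. \<Sum>j\<in>UNIV. Re (cnj (x $ i) * comparison_matrix X $ i $ j * x $ j))"
      unfolding y_def by (intro sum_mono entry_ge)
    also have "\<dots> = Re (\<Sum>i\<in>UNIV. \<Sum>j\<in>UNIV. cnj (x $ i) * comparison_matrix X $ i $ j * x $ j)"
      by (simp add: Re_sum)
    finally show ?thesis .
  qed
  show ?thesis unfolding psd_def using herm form by blast
qed

end
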